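(* Let $\mu,\nu\in\mathbb{R}$. The double inequality $$\frac{x^2+\mu x+12}{12x^4(x+1)^2}<[\psi'(x)]^2+\psi''(x)<\frac{x^2+\nu x+12}{12x^4(x+1)^2}$$ holds for all $x\in(0,\infty)$ if and only if $\mu\le0$ and $\nu\ge4$.
   Context: $\Gamma$ is Euler's gamma function, $\psi=\Gamma'/\Gamma$ is the digamma function, and $\psi',\psi''$ are its first and second derivatives. *)

theory Defs
  imports "HOL-Analysis.Analysis"
begin

end

theory Submission
  imports Defs "HOL-Real_Asymp.Real_Asymp"
begin

definition pp :: "real \<Rightarrow> real" where "pp y = 1/y + 1/(2*y^2) + 1/(6*y^3)"
definition qq :: "real \<Rightarrow> real" where "qq y = pp y - 1/(30*y^5)"
definition rr :: "real \<Rightarrow> real" where "rr y = -1/y^2 - 1/y^3 - 1/(2*y^4)"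
definition gg :: "real \<Rightarrow> real \<Rightarrow> real" where "gg c x = (x^2 + c*x + 12) / (12 * x^4 * (x + 1)^2)"

lemma telescope_neg:
  fixes h :: "real \<Rightarrow> real"
  assumes step: "\<And>y. y > 0 \<Longrightarrow> h y < h (y+1)"
    and lim: "\<And>y. y > 0 \<Longrightarrow> (\<lambda>m. h (y + real m)) \<longlonglongrightarrow> 0" and x: "x > 0"
  shows "h x < 0"
proof -
  have inc: "incseq (\<lambda>m. h (x + 1 + real m))"
  proof (rule incseq_SucI)
    fix m
    have "h (x + 1 + real m) < h (x + 1 + real m + 1)" using x by (intro step) auto
    thus "h (x + 1 + real m) \<le> h (x + 1 + real (Suc m))" by (simp add: add_ac)
  qed
  have "(\<lambda>m. h (x + 1 + real m)) \<longlonglongrightarrow> 0" using lim[of "x+1"] x by simp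
  from incseq_le[OF inc this, of 0] have "h (x+1) \<le> 0" by simp
  with step[OF x] show ?thesis by simp
qed

lemma Polygamma_tail:
  assumes x: "(x::real) > 0" and n: "n > 0"
  shows "(\<lambda>m. Polygamma n (x + real m)) \<longlonglongrightarrow> 0"
proof -
  have s: "(\<lambda>k. inverse ((x + of_nat k)^Suc n)) sums ((-1) ^ Suc n * Polygamma n x / fact n)"
    using Polygamma_LIMSEQ[of x n] x n by simp
  hence ps: "(\<lambda>m. \<Sum>k<m. inverse ((x + of_nat k)^Suc n)) \<longlonglongrightarrow> ((-1) ^ Suc n * Polygamma n x / fact n)"
    by (simp add: sums_def)
  have eq: "Polygamma n (x + real m) = Polygamma n x + (-1) ^ n * fact n * (\<Sum>k<m. inverse ((x + of_nat k)^Suc n))" for m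
    using Polygamma_plus_of_nat[of m x n] x by (simp add: inverse_eq_divide)
  have "(\<lambda>m. Polygamma n x + (-1) ^ n * fact n * (\<Sum>k<m. inverse ((x + of_nat k)^Suc n)))
     \<longlonglongrightarrow> Polygamma n x + (-1) ^ n * fact n * ((-1) ^ Suc n * Polygamma n x / fact n)"
    by (intro tendsto_intros ps)
  also have "Polygamma n x + (-1) ^ n * fact n * ((-1) ^ Suc n * Polygamma n x / fact n) = 0"
    by (simp add: power_add)
  finally show ?thesis by (simp add: eq)
qed

lemma inv_tail: "(x::real) > 0 \<Longrightarrow> (\<lambda>m. 1 / (x + real m)) \<longlonglongrightarrow> 0"
  by real_asymp

lemma pp_tail: "(x::real) > 0 \<Longrightarrow> (\<lambda>m. pp (x + real m)) \<longlonglongrightarrow> 0"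
  unfolding pp_def by real_asymp
lemma qq_tail: "(x::real) > 0 \<Longrightarrow> (\<lambda>m. qq (x + real m)) \<longlonglongrightarrow> 0"
  unfolding qq_def pp_def by real_asymp
lemma rr_tail: "(x::real) > 0 \<Longrightarrow> (\<lambda>m. rr (x + real m)) \<longlonglongrightarrow> 0"
  unfolding rr_def by real_asymp
lemma gg_tail: "(x::real) > 0 \<Longrightarrow> (\<lambda>m. gg c (x + real m)) \<longlonglongrightarrow> 0"
  unfolding gg_def by real_asymp

lemma P1_step: "(x::real) > 0 \<Longrightarrow> Polygamma 1 x = Polygamma 1 (x+1) + 1/x^2"
  using Polygamma_plus1[of x 1] by (simp add: power2_eq_square)
lemma P2_step: "(x::real) > 0 \<Longrightarrow> Polygamma 2 x = Polygamma 2 (x+1) - 2/x^3"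
  using Polygamma_plus1[of x 2] by (simp add: numeral_2_eq_2 power3_eq_cube)

lemma A_alg: assumes "(y::real) > 0" shows "1/y^2 - pp y + pp (y+1) = -1/(6*y^3*(y+1)^3)"
proof -
  obtain z where z: "z = y + 1" by blast
  have "z \<noteq> 0" "y \<noteq> 0" using assms z by auto
  hence "1/y^2 - pp y + pp z = -1/(6*y^3*z^3)"
    unfolding pp_def apply (simp add: field_simps) apply (simp only: z) by algebra
  thus ?thesis using z by simp
qed
lemma B_alg: assumes "(y::real) > 0" shows "1/y^2 - qq y + qq (y+1) = (1+5*y+5*y^2)/(30*y^5*(y+1)^5)"
proof -
  obtain z where z: "z = y + 1" by blast
  have "z \<noteq> 0" "y \<noteq> 0" using assms z by auto
  hence "1/y^2 - qq y + qq z = (1+5*y+5*y^2)/(30*y^5*z^5)"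
    unfolding qq_def pp_def apply (simp add: field_simps) apply (simp only: z) by algebra
  thus ?thesis using z by simp
qed
lemma C_alg: assumes "(y::real) > 0" shows "-2/y^3 - rr y + rr (y+1) = (1+2*y)/(2*y^4*(y+1)^4)"
proof -
  obtain z where z: "z = y + 1" by blast
  have "z \<noteq> 0" "y \<noteq> 0" using assms z by auto
  hence "-2/y^3 - rr y + rr z = (1+2*y)/(2*y^4*z^4)"
    unfolding rr_def apply (simp add: field_simps) apply (simp only: z) by algebra
  thus ?thesis using z by simp
qed
lemma D_alg: assumes "(x::real) > 0" shows "2*pp (x+1)/x^2 + 1/x^4 - 2/x^3 - gg 4 x + gg 4 (x+1)
   = -(16*x+36*x^2+32*x^3)/(12*x^4*(x+1)^4*(x+2)^2)"
proof -
  obtain z where z: "z = x + 1" by blast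
  obtain w where w: "w = x + 2" by blast
  have "z \<noteq> 0" "x \<noteq> 0" "w \<noteq> 0" using assms z w by auto
  hence "2*(1/z + 1/(2*z^2) + 1/(6*z^3))/x^2 + 1/x^4 - 2/x^3 - (x^2 + 4*x + 12) / (12 * x^4 * z^2)
     + (z^2 + 4*z + 12) / (12 * z^4 * w^2) = -(16*x+36*x^2+32*x^3)/(12*x^4*z^4*w^2)"
    apply (simp add: field_simps) apply (simp only: z w) by algebra
  note h = this[unfolded z w]
  have e: "x + 1 + 1 = x + 2" by simp
  show ?thesis unfolding pp_def gg_def e by (rule h)
qed
lemma E_alg: assumes "(x::real) > 0" shows "2*qq (x+1)/x^2 + 1/x^4 - 2/x^3 - gg 0 x + gg 0 (x+1)
   = (44*x^2+144*x^3+196*x^4+100*x^5)/(60*x^4*(x+1)^5*(x+2)^2)"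
proof -
  obtain z where z: "z = x + 1" by blast
  obtain w where w: "w = x + 2" by blast
  have "z \<noteq> 0" "x \<noteq> 0" "w \<noteq> 0" using assms z w by auto
  hence "2*(1/z + 1/(2*z^2) + 1/(6*z^3) - 1/(30*z^5))/x^2 + 1/x^4 - 2/x^3 - (x^2 + 0*x + 12) / (12 * x^4 * z^2)
     + (z^2 + 0*z + 12) / (12 * z^4 * w^2) = (44*x^2+144*x^3+196*x^4+100*x^5)/(60*x^4*z^5*w^2)"
    apply (simp add: field_simps) apply (simp only: z w) by algebra
  note h = this[unfolded z w]
  have e: "x + 1 + 1 = x + 2" by simp
  show ?thesis unfolding qq_def pp_def gg_def e by (rule h)
qed


lemma psi1_upper: assumes "(y::real) > 0" shows "Polygamma 1 y < pp y"
proof -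
  have "(\<lambda>y. Polygamma 1 y - pp y) y < 0"
  proof (rule telescope_neg[OF _ _ assms])
    fix y :: real assume y: "y > 0"
    have "0 < 1/(6*y^3*(y+1)^3)" using y by simp
    thus "Polygamma 1 y - pp y < Polygamma 1 (y + 1) - pp (y + 1)"
      using P1_step[OF y] A_alg[OF y] by linarith
  next
    fix y :: real assume y: "y > 0"
    show "(\<lambda>m. Polygamma 1 (y + real m) - pp (y + real m)) \<longlonglongrightarrow> 0"
      using tendsto_diff[OF Polygamma_tail[OF y, of 1] pp_tail[OF y]] by simp
  qed
  thus ?thesis by simp
qed

lemma psi1_lower: assumes "(y::real) > 0" shows "qq y < Polygamma 1 y"
proof -
  have "(\<lambda>y. qq y - Polygamma 1 y) y < 0"
  proof (rule telescope_neg[OF _ _ assms])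
    fix y :: real assume y: "y > 0"
    have "0 < 1+5*y+5*y^2" using y by (auto intro!: add_pos_pos mult_pos_pos)
    hence "0 < (1+5*y+5*y^2)/(30*y^5*(y+1)^5)" using y by (intro divide_pos_pos) auto
    thus "qq y - Polygamma 1 y < qq (y + 1) - Polygamma 1 (y + 1)"
      using P1_step[OF y] B_alg[OF y] by linarith
  next
    fix y :: real assume y: "y > 0"
    show "(\<lambda>m. qq (y + real m) - Polygamma 1 (y + real m)) \<longlonglongrightarrow> 0"
      using tendsto_diff[OF qq_tail[OF y] Polygamma_tail[OF y, of 1]] by simp
  qed
  thus ?thesis by simp
qed

lemma psi2_lower: assumes "(y::real) > 0" shows "rr y < Polygamma 2 y"
proof -
  have "(\<lambda>y. rr y - Polygamma 2 y) y < 0"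
  proof (rule telescope_neg[OF _ _ assms])
    fix y :: real assume y: "y > 0"
    have "0 < (1+2*y)/(2*y^4*(y+1)^4)" using y by (intro divide_pos_pos) auto
    thus "rr y - Polygamma 2 y < rr (y + 1) - Polygamma 2 (y + 1)"
      using P2_step[OF y] C_alg[OF y] by linarith
  next
    fix y :: real assume y: "y > 0"
    show "(\<lambda>m. rr (y + real m) - Polygamma 2 (y + real m)) \<longlonglongrightarrow> 0"
      using tendsto_diff[OF rr_tail[OF y] Polygamma_tail[OF y, of 2]] by simp
  qed
  thus ?thesis by simp
qed

lemma f_tail: assumes "(y::real) > 0"
  shows "(\<lambda>m. (Polygamma 1 (y + real m))^2 + Polygamma 2 (y + real m) - gg c (y + real m)) \<longlonglongrightarrow> 0"
  using tendsto_diff[OF tendsto_add[OF tendsto_power[OF Polygamma_tail[OF assms, of 1], of 2] Polygamma_tail[OF assms, of 2]] gg_tail[OF assms, of c]]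
  by simp

lemma f_diff: assumes x: "(x::real) > 0"
  shows "((Polygamma 1 x)^2 + Polygamma 2 x - gg c x) - ((Polygamma 1 (x+1))^2 + Polygamma 2 (x+1) - gg c (x+1))
     = 2 * Polygamma 1 (x+1) / x^2 + 1/x^4 - 2/x^3 - gg c x + gg c (x+1)"
proof -
  have aux: "(a + 1/x^2)^2 + (b - 2/x^3) - g - (a^2 + b - g') = 2*a/x^2 + 1/x^4 - 2/x^3 - g + g'" for a b g g' :: real
    using x by (simp add: power2_sum field_simps power2_eq_square power4_eq_xxxx)
  show ?thesis unfolding P1_step[OF x] P2_step[OF x] by (rule aux)
qed

lemma main_upper: assumes "(x::real) > 0" shows "(Polygamma 1 x)^2 + Polygamma 2 x < gg 4 x"
proof -
  have "(\<lambda>x. (Polygamma 1 x)^2 + Polygamma 2 x - gg 4 x) x < 0"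
  proof (rule telescope_neg[OF _ f_tail assms])
    fix y :: real assume y: "y > 0"
    have "2 * Polygamma 1 (y+1) / y^2 < 2 * pp (y+1) / y^2"
      using psi1_upper[of "y+1"] y by (intro divide_strict_right_mono) auto
    moreover have "0 < 16*y+36*y^2+32*y^3" using y by (auto intro!: add_pos_pos mult_pos_pos)
    hence "0 < (16*y+36*y^2+32*y^3)/(12*y^4*(y+1)^4*(y+2)^2)"
      using y by (intro divide_pos_pos) auto
    hence "-(16*y+36*y^2+32*y^3)/(12*y^4*(y+1)^4*(y+2)^2) < 0" by (metis minus_divide_left neg_less_0_iff_less)
    ultimately show "(Polygamma 1 y)^2 + Polygamma 2 y - gg 4 y < (Polygamma 1 (y+1))^2 + Polygamma 2 (y+1) - gg 4 (y+1)"
      using f_diff[OF y, of 4] D_alg[OF y] by linarith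
  qed
  thus ?thesis by simp
qed

lemma main_lower: assumes "(x::real) > 0" shows "gg 0 x < (Polygamma 1 x)^2 + Polygamma 2 x"
proof -
  have "(\<lambda>x. - ((Polygamma 1 x)^2 + Polygamma 2 x - gg 0 x)) x < 0"
  proof (rule telescope_neg[OF _ _ assms])
    fix y :: real assume y: "y > 0"
    have "2 * qq (y+1) / y^2 < 2 * Polygamma 1 (y+1) / y^2"
      using psi1_lower[of "y+1"] y by (intro divide_strict_right_mono) auto
    moreover have "0 < 44*y^2+144*y^3+196*y^4+100*y^5" using y by (auto intro!: add_pos_pos mult_pos_pos)
    hence "0 < (44*y^2+144*y^3+196*y^4+100*y^5)/(60*y^4*(y+1)^5*(y+2)^2)"
      using y by (intro divide_pos_pos) auto
    ultimately show "- ((Polygamma 1 y)^2 + Polygamma 2 y - gg 0 y) < - ((Polygamma 1 (y+1))^2 + Polygamma 2 (y+1) - gg 0 (y+1))"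
      using f_diff[OF y, of 0] E_alg[OF y] by linarith
  next
    fix y :: real assume y: "y > 0"
    show "(\<lambda>m. - ((Polygamma 1 (y + real m))^2 + Polygamma 2 (y + real m) - gg 0 (y + real m))) \<longlonglongrightarrow> 0"
      using tendsto_minus[OF f_tail[OF y, of 0]] by simp
  qed
  thus ?thesis by simp
qed

lemma lim0: "((\<lambda>x::real. (12*x^4*(x+1)^2*((1/x^2 + pp (x+1))^2 - 2/x^3) - 12 - x^2)/x) \<longlongrightarrow> 0) (at_right 0)"
  unfolding pp_def by real_asymp

lemma liminf: "((\<lambda>x::real. (12*x^4*(x+1)^2*(qq x ^2 + rr x) - x^2 - 12)/x) \<longlongrightarrow> 4) at_top"
  unfolding qq_def pp_def rr_def by real_asymp

lemma qq_ev: "eventually (\<lambda>x::real. qq x > 0) at_top"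
  unfolding qq_def pp_def by real_asymp


lemma gg_mono: "(x::real) > 0 \<Longrightarrow> a \<le> b \<Longrightarrow> gg a x \<le> gg b x"
  unfolding gg_def by (intro divide_right_mono) (auto intro: mult_right_mono)

theorem theorem1p1:
  fixes \<mu> \<nu> :: real
  shows "(\<forall>x::real. x > 0 \<longrightarrow>
            (x^2 + \<mu> * x + 12) / (12 * x^4 * (x + 1)^2) < (Polygamma 1 x)^2 + Polygamma 2 x \<and>
            (Polygamma 1 x)^2 + Polygamma 2 x < (x^2 + \<nu> * x + 12) / (12 * x^4 * (x + 1)^2))
         \<longleftrightarrow> (\<mu> \<le> 0 \<and> \<nu> \<ge> 4)"
proof
  assume H: "\<forall>x::real. x > 0 \<longrightarrow>
            (x^2 + \<mu> * x + 12) / (12 * x^4 * (x + 1)^2) < (Polygamma 1 x)^2 + Polygamma 2 x \<and>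
            (Polygamma 1 x)^2 + Polygamma 2 x < (x^2 + \<nu> * x + 12) / (12 * x^4 * (x + 1)^2)"
  have "\<mu> \<le> 0"
  proof (rule ccontr)
    assume "\<not> \<mu> \<le> 0" hence mu: "\<mu> > 0" by simp
    have ev1: "eventually (\<lambda>x::real. (12*x^4*(x+1)^2*((1/x^2 + pp (x+1))^2 - 2/x^3) - 12 - x^2)/x < \<mu>) (at_right 0)"
      using order_tendstoD(2)[OF lim0 mu] .
    have ev2: "eventually (\<lambda>x::real. x > 0) (at_right 0)"
      by (simp add: eventually_at_filter)
    obtain x :: real where x: "x > 0"
      and xe: "(12*x^4*(x+1)^2*((1/x^2 + pp (x+1))^2 - 2/x^3) - 12 - x^2)/x < \<mu>"
      using eventually_happens'[OF _ eventually_conj[OF ev1 ev2]] by auto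
    define U where "U = (1/x^2 + pp (x+1))^2 - 2/x^3"
    have D: "12*x^4*(x+1)^2 > 0" using x by simp
    have "12*x^4*(x+1)^2*U - 12 - x^2 < \<mu> * x" using xe x unfolding U_def by (simp add: divide_less_eq)
    hence "12*x^4*(x+1)^2*U < x^2 + \<mu> * x + 12" by simp
    hence U: "U < (x^2 + \<mu> * x + 12) / (12 * x^4 * (x + 1)^2)"
      using D by (simp add: less_divide_eq mult.commute)
    have a: "0 < Polygamma 1 x" proof -
      have "x \<notin> \<int>\<^sub>\<le>\<^sub>0" using x nonpos_Ints_nonpos by force
      thus ?thesis using Polygamma_real_odd_pos[of x 1] by simp
    qed
    have b: "Polygamma 1 x < 1/x^2 + pp (x+1)" using P1_step[OF x] psi1_upper[of "x+1"] x by simp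
    have "(Polygamma 1 x)^2 < (1/x^2 + pp (x+1))^2" using a b by (intro power_strict_mono) auto
    moreover have "Polygamma 2 x < - 2/x^3"
      using P2_step[OF x] Polygamma_real_even_neg[of "x+1" 2] x by simp
    ultimately have "(Polygamma 1 x)^2 + Polygamma 2 x < U" unfolding U_def by simp
    with U H x show False by force
  qed
  moreover have "\<nu> \<ge> 4"
  proof (rule ccontr)
    assume "\<not> \<nu> \<ge> 4" hence nu: "\<nu> < 4" by simp
    have ev1: "eventually (\<lambda>x::real. (12*x^4*(x+1)^2*(qq x ^2 + rr x) - x^2 - 12)/x > \<nu>) at_top"
      using order_tendstoD(1)[OF liminf nu] .
    obtain x :: real where x: "x > 0" and q: "qq x > 0"
      and xe: "(12*x^4*(x+1)^2*(qq x ^2 + rr x) - x^2 - 12)/x > \<nu>"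
      using eventually_happens'[OF _ eventually_conj[OF ev1 eventually_conj[OF qq_ev eventually_gt_at_top[of 0]]]] by auto
    define L where "L = qq x ^2 + rr x"
    have D: "12*x^4*(x+1)^2 > 0" using x by simp
    have "12*x^4*(x+1)^2*L - x^2 - 12 > \<nu> * x" using xe x unfolding L_def by (simp add: less_divide_eq)
    hence "12*x^4*(x+1)^2*L > x^2 + \<nu> * x + 12" by simp
    hence L: "L > (x^2 + \<nu> * x + 12) / (12 * x^4 * (x + 1)^2)"
      using D by (simp add: divide_less_eq mult.commute)
    have "qq x ^2 < (Polygamma 1 x)^2" using q psi1_lower[OF x] by (intro power_strict_mono) auto
    moreover have "rr x < Polygamma 2 x" using psi2_lower[OF x] .
    ultimately have "L < (Polygamma 1 x)^2 + Polygamma 2 x" unfolding L_def by simp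
    with L H x show False by force
  qed
  ultimately show "\<mu> \<le> 0 \<and> \<nu> \<ge> 4" by simp
next
  assume "\<mu> \<le> 0 \<and> \<nu> \<ge> 4"
  hence mn: "\<mu> \<le> 0" "4 \<le> \<nu>" by auto
  show "\<forall>x::real. x > 0 \<longrightarrow>
            (x^2 + \<mu> * x + 12) / (12 * x^4 * (x + 1)^2) < (Polygamma 1 x)^2 + Polygamma 2 x \<and>
            (Polygamma 1 x)^2 + Polygamma 2 x < (x^2 + \<nu> * x + 12) / (12 * x^4 * (x + 1)^2)"
  proof (intro allI impI conjI)
    fix x :: real assume x: "x > 0"
    show "(x^2 + \<mu> * x + 12) / (12 * x^4 * (x + 1)^2) < (Polygamma 1 x)^2 + Polygamma 2 x"
      using gg_mono[OF x mn(1)] main_lower[OF x] unfolding gg_def by simp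
    show "(Polygamma 1 x)^2 + Polygamma 2 x < (x^2 + \<nu> * x + 12) / (12 * x^4 * (x + 1)^2)"
      using gg_mono[OF x mn(2)] main_upper[OF x] unfolding gg_def by simp
  qed
qed

end
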